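(* Let $A_n=1$ if $n=2^{k+1}-2$ for some integer $k\ge0$ and $A_n=0$ otherwise, and let $D(n)=\det\left(A_{i+j}\right)_{i,j=0}^{n-1}$ for $n\ge1$, $D(0)=1$. Then for all $n\ge 0$, $$D(2n)=(-1)^{\binom{n}{2}}D(n),\qquad D(2n+1)=(-1)^{\binom{n+1}{2}}D(n).$$ *)

theory Defs
  imports Main "Jordan_Normal_Form.Determinant"
begin

definition A :: "nat \<Rightarrow> int" where
  "A n = (if \<exists>k::nat. n = 2 ^ (k + 1) - 2 then 1 else 0)"

definition D :: "nat \<Rightarrow> int" where
  "D n = (if n = 0 then 1 else det (mat n n (\<lambda>(i, j). A (i + j))))"

end

theory Submission
  imports Defs
begin

lemma det_sym_perm:
  assumes p: "p permutes {0..<n}"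
  shows "det (mat n n (\<lambda>(i,j). f (p i) (p j))) = det (mat n n (\<lambda>(i,j). f i j) :: int mat)"
proof -
  have pin: "\<And>i. i < n \<Longrightarrow> p i < n" using permutes_in_image[OF p] by auto
  let ?B = "mat n n (\<lambda>(i,j). f i (p j)) :: int mat"
  have B: "?B \<in> carrier_mat n n" by auto
  have 1: "det (mat n n (\<lambda>(i,j). f (p i) (p j))) = signof p * det ?B"
    by (rule trans[OF _ det_permute_rows[OF B p]], rule arg_cong[of _ _ det], rule eq_matI, auto simp: pin)
  let ?C = "mat n n (\<lambda>(i,j). f j i) :: int mat"
  have C: "?C \<in> carrier_mat n n" by auto
  have "det ?B = det (?B\<^sup>T)" by (rule det_transpose[OF B, symmetric])
  also have "?B\<^sup>T = mat n n (\<lambda>(i,j). ?C $$ (p i, j))" by (rule eq_matI, auto simp: pin)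
  also have "det \<dots> = signof p * det ?C" by (rule det_permute_rows[OF C p])
  also have "det ?C = det (?C\<^sup>T)" by (rule det_transpose[OF C, symmetric])
  also have "?C\<^sup>T = mat n n (\<lambda>(i,j). f i j)" by (rule eq_matI, auto)
  finally have 2: "det ?B = signof p * det (mat n n (\<lambda>(i,j). f i j))" .
  have 3: "(signof p :: int) * signof p = 1" by (simp add: sign_def)
  show ?thesis unfolding 1 2 by (simp add: mult.assoc[symmetric] 3)
qed

lemma det_block:
  fixes M :: "int mat"
  assumes M: "M \<in> carrier_mat (a+b) (a+b)"
  and z: "\<And>i j. a \<le> i \<Longrightarrow> i < a+b \<Longrightarrow> j < a \<Longrightarrow> M $$ (i,j) = 0"
  shows "det M = det (mat a a (\<lambda>(i,j). M $$ (i,j))) * det (mat b b (\<lambda>(i,j). M $$ (i+a,j+a)))"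
proof -
  have "M = four_block_mat (mat a a (\<lambda>(i,j). M $$ (i,j))) (mat a b (\<lambda>(i,j). M $$ (i,j+a)))
     (0\<^sub>m b a) (mat b b (\<lambda>(i,j). M $$ (i+a,j+a)))"
    using M by (intro eq_matI) (auto simp: z)
  also have "det \<dots> = det (mat a a (\<lambda>(i,j). M $$ (i,j))) * det (mat b b (\<lambda>(i,j). M $$ (i+a,j+a)))"
    by (rule det_four_block_mat_lower_left_zero) auto
  finally show ?thesis .
qed

definition par :: "nat \<Rightarrow> nat \<Rightarrow> nat \<Rightarrow> nat" where
  "par e N t = (if t < e then 2*t else if t < N then 2*(t-e)+1 else t)"

lemma par_permutes:
  assumes "N \<le> 2*e" "2*e \<le> N+1"
  shows "par e N permutes {0..<N}"
proof (rule bij_imp_permutes)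
  show "bij_betw (par e N) {0..<N} {0..<N}"
  proof (rule bij_betw_imageI)
    show "inj_on (par e N) {0..<N}"
      by (rule inj_onI) (auto simp: par_def split: if_splits; presburger)
    show "par e N ` {0..<N} = {0..<N}"
    proof
      show "par e N ` {0..<N} \<subseteq> {0..<N}" using assms by (auto simp: par_def)
      show "{0..<N} \<subseteq> par e N ` {0..<N}"
      proof
        fix x assume x: "x \<in> {0..<N}"
        show "x \<in> par e N ` {0..<N}"
        proof (cases "even x")
          case True
          then have "par e N (x div 2) = x" "x div 2 \<in> {0..<N}" using x assms by (auto simp: par_def)
          then show ?thesis by (metis imageI)
        next
          case False
          have lt: "e + x div 2 < N" using x assms False by simp presburger
          then have "par e N (e + x div 2) = x" "e + x div 2 \<in> {0..<N}" using False by (auto simp: par_def)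
          then show ?thesis by (metis imageI)
        qed
      qed
    qed
  qed
qed (use assms in \<open>auto simp: par_def\<close>)

lemma A_odd: "odd n \<Longrightarrow> A n = 0"
proof -
  assume o: "odd n"
  have "\<not> (\<exists>k::nat. n = 2 ^ (k + 1) - 2)"
  proof
    assume "\<exists>k::nat. n = 2 ^ (k + 1) - 2"
    then obtain k :: nat where "n = 2 ^ (k + 1) - 2" by blast
    then have "n = 2 * (2^k - 1)" by (simp add: right_diff_distrib')
    with o show False by simp
  qed
  then show ?thesis by (simp add: A_def)
qed

lemma A_shift: "A (2*m+2) = A m"
proof -
  have "(\<exists>k::nat. 2*m+2 = 2 ^ (k + 1) - 2) \<longleftrightarrow> (\<exists>k::nat. m = 2 ^ (k + 1) - 2)"
  proof
    assume "\<exists>k::nat. 2*m+2 = 2 ^ (k + 1) - 2"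
    then obtain k :: nat where k: "2*m+2 = 2 ^ (k + 1) - 2" by blast
    show "\<exists>k::nat. m = 2 ^ (k + 1) - 2"
    proof (cases k)
      case 0 then show ?thesis using k by simp
    next
      case (Suc j)
      have p: "(2::nat) ^ (j+1) \<ge> 2" using one_le_power[of "2::nat" j] by simp
      have "2*m+2 = 2 * 2^(j+1) - 2" using k Suc by simp
      then have "m = 2^(j+1) - 2" using p by linarith
      then show ?thesis by blast
    qed
  next
    assume "\<exists>k::nat. m = 2 ^ (k + 1) - 2"
    then obtain k :: nat where k: "m = 2 ^ (k + 1) - 2" by blast
    have p: "(2::nat) ^ (k+1) \<ge> 2" using one_le_power[of "2::nat" k] by simp
    have e: "(2::nat) ^ (Suc k + 1) = 2 * 2^(k+1)" by simp
    have "2*m+2 = 2 ^ (Suc k + 1) - 2" unfolding e using k p by linarith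
    then show "\<exists>k::nat. 2*m+2 = 2 ^ (k + 1) - 2" by blast
  qed
  then show ?thesis by (simp add: A_def)
qed

lemma A_0: "A 0 = 1" by (auto simp: A_def intro: exI[of _ 0])

lemma c1: "A (2*(2*t+1)) = A (2*t)"
  using A_shift[of "2*t"] by (simp add: algebra_simps)
lemma c2: "A (2*(2*t+2)) = 0"
  using A_shift[of "2*t+1"] A_odd[of "2*t+1"] by (simp add: algebra_simps)
lemma c3: "A (2*(t+1)) = A t"
  using A_shift[of t] by (simp add: algebra_simps)

definition Emat :: "nat \<Rightarrow> int mat" where "Emat n = mat n n (\<lambda>(i,j). A (2*(i+j)))"
definition Hmat :: "nat \<Rightarrow> int mat" where "Hmat n = mat n n (\<lambda>(i,j). A (i+j))"

lemma split_H: "det (Hmat N) = det (Emat (N - N div 2)) * det (Hmat (N div 2))"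
proof -
  define e where "e = N - N div 2"
  define ob where "ob = N div 2"
  have N: "N = e + ob" unfolding e_def ob_def by simp
  have pp: "par e N permutes {0..<N}" by (rule par_permutes) (auto simp: e_def)
  let ?M = "mat N N (\<lambda>(i,j). A (par e N i + par e N j))"
  have "det (Hmat N) = det ?M" unfolding Hmat_def
    by (rule det_sym_perm[OF pp, of "\<lambda>i j. A (i+j)", symmetric])
  also have "\<dots> = det (mat e e (\<lambda>(i,j). ?M $$ (i,j))) * det (mat ob ob (\<lambda>(i,j). ?M $$ (i+e,j+e)))"
  proof (rule det_block)
    show "?M \<in> carrier_mat (e+ob) (e+ob)" using N by simp
    fix i j assume "e \<le> i" "i < e+ob" "j < e"
    then show "?M $$ (i,j) = 0" using N by (auto simp: par_def intro!: A_odd)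
  qed
  also have "mat e e (\<lambda>(i,j). ?M $$ (i,j)) = Emat e"
    unfolding Emat_def using N by (intro eq_matI) (auto simp: par_def algebra_simps)
  also have "mat ob ob (\<lambda>(i,j). ?M $$ (i+e,j+e)) = Hmat ob"
  proof (intro eq_matI)
    fix i j assume ij: "i < dim_row (Hmat ob)" "j < dim_col (Hmat ob)"
    then have "mat ob ob (\<lambda>(i,j). ?M $$ (i+e,j+e)) $$ (i,j) = A (2*(i+j)+2)"
      using N by (auto simp: par_def Hmat_def algebra_simps)
    also have "\<dots> = Hmat ob $$ (i,j)" using ij A_shift[of "i+j"] by (simp add: Hmat_def algebra_simps)
    finally show "mat ob ob (\<lambda>(i,j). ?M $$ (i+e,j+e)) $$ (i,j) = Hmat ob $$ (i,j)" .
  qed (auto simp: Hmat_def)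
  finally show ?thesis unfolding e_def ob_def .
qed

lemma E_even: "det (Emat (k+k)) = (-1)^(k*k) * det (Emat k) * det (Emat k)"
proof -
  let ?p = "par k (k+k)"
  have pp: "?p permutes {0..<k+k}" by (rule par_permutes) auto
  let ?M1 = "mat (k+k) (k+k) (\<lambda>(i,j). A (2*(?p i + ?p j)))"
  have "det (Emat (k+k)) = det ?M1" unfolding Emat_def
    by (rule det_sym_perm[OF pp, of "\<lambda>i j. A (2*(i+j))", symmetric])
  also have "\<dots> = (-1)^(k*k) * det (mat (k+k) (k+k) (\<lambda>(i,j). ?M1 $$ (i, if j < k then j + k else j - k)))"
    by (rule det_swap_cols) auto
  also have "det (mat (k+k) (k+k) (\<lambda>(i,j). ?M1 $$ (i, if j < k then j + k else j - k)))
     = det (Emat k) * det (Emat k)" (is "det ?M3 = _")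
  proof -
    have "det ?M3 = det (mat k k (\<lambda>(i,j). ?M3 $$ (i,j))) * det (mat k k (\<lambda>(i,j). ?M3 $$ (i+k,j+k)))"
    proof (rule det_block)
      fix i j assume ij: "k \<le> i" "i < k+k" "j < k"
      then have "?M3 $$ (i,j) = A (2*((2*(i-k)+1) + (2*j+1)))" by (simp add: par_def)
      also have "2*((2*(i-k)+1) + (2*j+1)) = 2*(2*(i-k+j)+2)" using ij by simp
      finally have "?M3 $$ (i,j) = A (2*(2*(i-k+j)+2))" .
      then show "?M3 $$ (i,j) = 0" by (simp only: c2)
    qed auto
    also have "mat k k (\<lambda>(i,j). ?M3 $$ (i,j)) = Emat k"
    proof (rule eq_matI)
      fix i j assume ij: "i < dim_row (Emat k)" "j < dim_col (Emat k)"
      then have "mat k k (\<lambda>(i,j). ?M3 $$ (i,j)) $$ (i,j) = A (2*(2*i+(2*j+1)))"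
        by (simp add: par_def Emat_def)
      also have "2*(2*i+(2*j+1)) = 2*(2*(i+j)+1)" by simp
      also have "A (2*(2*(i+j)+1)) = A (2*(i+j))" by (rule c1)
      also have "\<dots> = Emat k $$ (i,j)" using ij by (simp add: Emat_def)
      finally show "mat k k (\<lambda>(i,j). ?M3 $$ (i,j)) $$ (i,j) = Emat k $$ (i,j)" .
    qed (auto simp: Emat_def)
    also have "mat k k (\<lambda>(i,j). ?M3 $$ (i+k,j+k)) = Emat k"
    proof (rule eq_matI)
      fix i j assume ij: "i < dim_row (Emat k)" "j < dim_col (Emat k)"
      then have "mat k k (\<lambda>(i,j). ?M3 $$ (i+k,j+k)) $$ (i,j) = A (2*((2*i+1)+2*j))"
        by (simp add: par_def Emat_def)
      also have "2*((2*i+1)+2*j) = 2*(2*(i+j)+1)" by simp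
      also have "A (2*(2*(i+j)+1)) = A (2*(i+j))" by (rule c1)
      also have "\<dots> = Emat k $$ (i,j)" using ij by (simp add: Emat_def)
      finally show "mat k k (\<lambda>(i,j). ?M3 $$ (i+k,j+k)) $$ (i,j) = Emat k $$ (i,j)" .
    qed (auto simp: Emat_def)
    finally show ?thesis .
  qed
  finally show ?thesis by simp
qed

lemma E_odd: "det (Emat (k+(k+1))) = (-1)^(k*(k+1)) * ((-1)^(1*k) * (det (Hmat k) * (1 * det (Hmat k))))"
proof -
  let ?N = "k+(k+1)"
  let ?p = "par (k+1) ?N"
  have pp: "?p permutes {0..<?N}" by (rule par_permutes) auto
  define M1 where "M1 = mat ?N ?N (\<lambda>(i,j). A (2*(?p i + ?p j)))"
  define M2 where "M2 = mat ?N ?N (\<lambda>(i,j). M1 $$ ((if i < k then i + (k+1) else i - k), j))"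
  define M3 where "M3 = mat ?N ?N (\<lambda>(i,j). M2 $$ (i, if j < k then j + 1 else if j < 1 + k then j - k else j))"
  define B where "B = mat (k+1) (k+1) (\<lambda>(i,j). M3 $$ (i+k,j+k))"
  have "det (Emat ?N) = det M1" unfolding Emat_def M1_def
    by (rule det_sym_perm[OF pp, of "\<lambda>i j. A (2*(i+j))", symmetric])
  also have "\<dots> = (-1)^(k*(k+1)) * det M2" unfolding M2_def
    by (rule det_swap_rows) (simp add: M1_def)
  also have "det M2 = (-1)^(1*k) * det M3" unfolding M3_def
    by (rule det_swap_initial_cols) (auto simp: M2_def)
  also have "det M3 = det (mat k k (\<lambda>(i,j). M3 $$ (i,j))) * det B" unfolding B_def
  proof (rule det_block)
    fix i j assume ij: "k \<le> i" "i < k+(k+1)" "j < k"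
    have h: "i - k < Suc k" using ij by simp
    then have "M3 $$ (i,j) = A (2*(2*(i-k) + 2*(j+1)))" using ij by (simp add: M3_def M2_def M1_def par_def)
    also have "2*(2*(i-k) + 2*(j+1)) = 2*(2*(i-k+j)+2)" using ij by simp
    also have "A \<dots> = 0" by (rule c2)
    finally show "M3 $$ (i,j) = 0" .
  qed (simp add: M3_def)
  also have "mat k k (\<lambda>(i,j). M3 $$ (i,j)) = Hmat k"
  proof (rule eq_matI)
    fix i j assume ij: "i < dim_row (Hmat k)" "j < dim_col (Hmat k)"
    then have "mat k k (\<lambda>(i,j). M3 $$ (i,j)) $$ (i,j) = A (2*((2*i+1) + 2*(j+1)))"
      by (simp add: M3_def M2_def M1_def par_def Hmat_def)
    also have "2*((2*i+1) + 2*(j+1)) = 2*(2*(i+j+1)+1)" by simp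
    also have "A \<dots> = A (2*(i+j+1))" by (rule c1)
    also have "\<dots> = A (i+j)" by (rule c3)
    also have "\<dots> = Hmat k $$ (i,j)" using ij by (simp add: Hmat_def)
    finally show "mat k k (\<lambda>(i,j). M3 $$ (i,j)) $$ (i,j) = Hmat k $$ (i,j)" .
  qed (auto simp: Hmat_def)
  also have "det B = det (mat 1 1 (\<lambda>(i,j). B $$ (i,j))) * det (mat k k (\<lambda>(i,j). B $$ (i+1,j+1)))"
  proof (rule det_block)
    fix i j :: nat assume ij: "1 \<le> i" "i < 1+k" "j < 1"
    then have "B $$ (i,j) = A (2*(2*i + 0))" by (simp add: B_def M3_def M2_def M1_def par_def)
    also have "2*(2*i + 0) = 2*(2*(i-1)+2)" using ij by simp
    also have "A \<dots> = 0" by (rule c2)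
    finally show "B $$ (i,j) = 0" .
  qed (simp add: B_def)
  also have "det (mat 1 1 (\<lambda>(i,j). B $$ (i,j))) = 1"
    by (subst det_single) (auto simp: B_def M3_def M2_def M1_def par_def A_0)
  also have "mat k k (\<lambda>(i,j). B $$ (i+1,j+1)) = Hmat k"
  proof (rule eq_matI)
    fix i j assume ij: "i < dim_row (Hmat k)" "j < dim_col (Hmat k)"
    then have "mat k k (\<lambda>(i,j). B $$ (i+1,j+1)) $$ (i,j) = A (2*(2*(i+1) + (2*j+1)))"
      by (simp add: B_def M3_def M2_def M1_def par_def Hmat_def)
    also have "2*(2*(i+1) + (2*j+1)) = 2*(2*(i+j+1)+1)" by simp
    also have "A \<dots> = A (2*(i+j+1))" by (rule c1)
    also have "\<dots> = A (i+j)" by (rule c3)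
    also have "\<dots> = Hmat k $$ (i,j)" using ij by (simp add: Hmat_def)
    finally show "mat k k (\<lambda>(i,j). B $$ (i+1,j+1)) $$ (i,j) = Hmat k $$ (i,j)" .
  qed (auto simp: Hmat_def)
  finally show ?thesis .
qed

lemma neg1_par: "even a = even b \<Longrightarrow> (-1::int)^a = (-1)^b"
  by (cases "even a") (auto simp: neg_one_even_power neg_one_odd_power)

lemma sq_neg1: "((-1::int)^a) * ((-1)^a) = 1"
  by (simp add: power_add[symmetric] mult_2[symmetric] power_mult)

lemma par_even: "even ((k+k) choose 2) = even (k*k)"
proof (cases k)
  case 0 then show ?thesis by (simp add: binomial_eq_0)
next
  case (Suc j)
  have "(k+k) choose 2 = (k+k)*(k+k-1) div 2" by (rule choose_two)
  also have "(k+k)*(k+k-1) = 2*(k*(2*j+1))" using Suc by (simp add: algebra_simps)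
  finally have "(k+k) choose 2 = k*(2*j+1)" by simp
  then show ?thesis by simp
qed

lemma par_odd: "even ((k+(k+1)) choose 2) = even (k*(k+1) + 1*k)"
proof -
  have "(k+(k+1)) choose 2 = (k+(k+1))*(k+(k+1)-1) div 2" by (rule choose_two)
  also have "(k+(k+1))*(k+(k+1)-1) = 2*(k*(2*k+1))" by (simp add: algebra_simps)
  finally have "(k+(k+1)) choose 2 = k*(2*k+1)" by simp
  then show ?thesis by simp
qed

lemma main_ind: "det (Emat m) = (-1)^(m choose 2) \<and> det (Hmat m) * det (Hmat m) = 1"
proof (induction m rule: less_induct)
  case (less m)
  have E: "det (Emat m) = (-1)^(m choose 2)"
  proof (cases "m = 0")
    case True then show ?thesis by (simp add: Emat_def binomial_eq_0)
  next
    case False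
    show ?thesis
    proof (cases "even m")
      case True
      then obtain k where k: "m = k+k" by (metis evenE mult_2)
      then have "k < m" using False by simp
      then have IH: "det (Emat k) = (-1)^(k choose 2)" using less by blast
      have "det (Emat m) = (-1)^(k*k) * (det (Emat k) * det (Emat k))"
        unfolding k E_even by simp
      also have "\<dots> = (-1)^(k*k)" unfolding IH sq_neg1 by simp
      also have "\<dots> = (-1)^(m choose 2)" unfolding k by (rule neg1_par) (simp add: par_even)
      finally show ?thesis .
    next
      case False
      then obtain k where k: "m = k+(k+1)" by (metis oddE mult_2 add.assoc)
      then have "k < m" by simp
      then have IH: "det (Hmat k) * det (Hmat k) = 1" using less by blast
      have "det (Emat m) = (-1)^(k*(k+1)) * ((-1)^(1*k) * (det (Hmat k) * (1 * det (Hmat k))))"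
        unfolding k by (rule E_odd)
      also have "\<dots> = (-1)^(k*(k+1) + 1*k)" using IH by (simp add: power_add)
      also have "\<dots> = (-1)^(m choose 2)" unfolding k by (rule neg1_par) (metis par_odd)
      finally show ?thesis .
    qed
  qed
  have H: "det (Hmat m) * det (Hmat m) = 1"
  proof (cases "m = 0")
    case True then show ?thesis by (simp add: Hmat_def)
  next
    case False
    have Ee: "det (Emat (m - m div 2)) * det (Emat (m - m div 2)) = 1"
    proof (cases "m - m div 2 < m")
      case True
      then show ?thesis using less sq_neg1 by metis
    next
      case False
      then have "m - m div 2 = m" by simp
      then show ?thesis using E sq_neg1 by metis
    qed
    have "m div 2 < m" using \<open>m \<noteq> 0\<close> by simp
    then have Hh: "det (Hmat (m div 2)) * det (Hmat (m div 2)) = 1" using less by blast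
    show ?thesis unfolding split_H[of m] using Ee Hh
      by (metis mult.assoc mult.commute mult_1_right)
  qed
  show ?case using E H by blast
qed

lemma D_H: "D n = det (Hmat n)"
  by (simp add: D_def Hmat_def)

theorem theorem2p5:
  fixes n :: nat
  shows "D (2 * n) = (-1) ^ (n choose 2) * D n
     \<and> D (2 * n + 1) = (-1) ^ ((n + 1) choose 2) * D n"
proof
  have "D (2*n) = det (Emat n) * det (Hmat n)"
    unfolding D_H split_H[of "2*n"] by simp
  then show "D (2 * n) = (-1) ^ (n choose 2) * D n" using main_ind[of n] D_H by simp
  have s: "2*n+1 - (2*n+1) div 2 = n+1" "(2*n+1) div 2 = n" "2*n+1-n = n+1" by auto
  have "D (2*n+1) = det (Emat (n+1)) * det (Hmat n)"
    unfolding D_H split_H[of "2*n+1"] using s by simp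
  then show "D (2 * n + 1) = (-1) ^ ((n + 1) choose 2) * D n" using main_ind[of "n+1"] D_H by simp
qed

end
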